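(* Let $\phi$ be the Brier scoring rule, whose negative entropy is $h(p)=\|p\|^2-1$, so that for random vectors $U,V$ in $\mathbb{R}^K$, $\mathrm{Var}_h(U\mid V)=\mathbb{E}[\|U\|^2\mid V]-\|\mathbb{E}[U\mid V]\|^2$. Let $C:=\mathbb{E}[Q\mid S]$, $S_B$ a binned version of $S$ and $C_B:=\mathbb{E}[Q\mid S_B]$. Then $$\underbrace{\mathbb{E}\big[\|S_B-C_B\|^2\big]}_{\mathrm{CL}(S_B)}=\underbrace{\mathbb{E}\big[\|S-C\|^2\big]}_{\mathrm{CL}(S)}\;\underbrace{-\;\mathbb{E}\big[\mathrm{Var}_h(S-C\mid S_B)\big]}_{\mathrm{CL}_{\mathrm{induced}}(S,S_B)}.$$
   Context: Let $(X,Y)$ be jointly distributed with $X\in\mathcal{X}$ and $Y\in\{e_1,\dots,e_K\}$ (one-hot vectors of $\mathbb{R}^K$); $\Delta_K$ is the probability simplex; $Q\in\Delta_K$ with $Q_k:=P(Y=e_k\mid X)$; $S=f(X)\in\Delta_K$ for a classifier $f$. Binned classifier: given a partition $\{\mathcal{B}_j\}_{1\le j\le J}$ of $\Delta_K$, $S_B$ equals $\mathbb{E}[S\mid S\in\mathcal{B}_j]$ on $\{S\in\mathcal{B}_j\}$. $\|\cdot\|$ is the Euclidean norm. *)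

theory Defs
  imports "HOL-Probability.Probability"
begin

definition prob_simplex :: "(real ^ 'k::finite) set" where
  "prob_simplex = {p. (\<forall>k. 0 \<le> p $ k) \<and> (\<Sum>k\<in>UNIV. p $ k) = 1}"

definition gen_sigma :: "'a measure \<Rightarrow> ('a \<Rightarrow> 'b) \<Rightarrow> 'b measure \<Rightarrow> 'a measure" where
  "gen_sigma M V N = vimage_algebra (space M) V N"

definition vcond_exp :: "'a measure \<Rightarrow> 'a measure \<Rightarrow> ('a \<Rightarrow> real ^ 'k::finite) \<Rightarrow> 'a \<Rightarrow> real ^ 'k" where
  "vcond_exp M F U = (\<lambda>w. \<chi> k. real_cond_exp M F (\<lambda>w'. U w' $ k) w)"

definition var_h_brier :: "'a measure \<Rightarrow> 'a measure \<Rightarrow> ('a \<Rightarrow> real ^ 'k::finite) \<Rightarrow> 'a \<Rightarrow> real" where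
  "var_h_brier M F U = (\<lambda>w. real_cond_exp M F (\<lambda>w'. (norm (U w'))\<^sup>2) w - (norm (vcond_exp M F U w))\<^sup>2)"

text \<open>Binned classifier: on {S \<in> B j}, S_B equals E[S | S \<in> B j] (elementary conditional expectation).\<close>
definition binned :: "'a measure \<Rightarrow> ('a \<Rightarrow> real ^ 'k::finite) \<Rightarrow> nat \<Rightarrow> (nat \<Rightarrow> (real ^ 'k) set) \<Rightarrow> 'a \<Rightarrow> real ^ 'k" where
  "binned M S J B = (\<lambda>w. \<Sum>j<J. indicator (S -` B j \<inter> space M) w *\<^sub>R
      ((1 / measure M (S -` B j \<inter> space M)) *\<^sub>R (LINT w'|M. indicator (S -` B j \<inter> space M) w' *\<^sub>R S w')))"

end

theory Submission imports Defs begin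

lemma normsq_vec: "(norm (x::real^'k::finite))\<^sup>2 = (\<Sum>i\<in>UNIV. (x$i)\<^sup>2)"
  by (simp add: norm_vec_def L2_set_def sum_nonneg)

lemma gen_sigma_sub:
  assumes "prob_space M" "V \<in> measurable M N"
  shows "sigma_finite_subalgebra M (gen_sigma M V N)" "subalgebra M (gen_sigma M V N)"
proof -
  show sub: "subalgebra M (gen_sigma M V N)"
    unfolding subalgebra_def gen_sigma_def
    using sets_image_in_sets[OF refl assms(2)] by simp
  interpret prob_space M by fact
  have "finite_measure_subalgebra M (gen_sigma M V N)"
    by unfold_locales (rule sub)
  then show "sigma_finite_subalgebra M (gen_sigma M V N)"
    by (rule finite_measure_subalgebra_is_sigma_finite)
qed

lemma sq_cond_exp_int:
  assumes "sigma_finite_subalgebra M F" "integrable M g" "integrable M (\<lambda>x. (g x)\<^sup>2)"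
  shows "integrable M (\<lambda>x. (real_cond_exp M F g x)\<^sup>2)"
  using sigma_finite_subalgebra.integrable_convex_cond_exp[OF assms(1), where X=g and I=UNIV and q="\<lambda>x. x\<^sup>2"]
    assms convex_power2 by auto

lemma sq_diff_int:
  fixes f g :: "'a \<Rightarrow> real"
  assumes "integrable M (\<lambda>x. (f x)\<^sup>2)" "integrable M (\<lambda>x. (g x)\<^sup>2)"
    "f \<in> borel_measurable M" "g \<in> borel_measurable M"
  shows "integrable M (\<lambda>x. (f x - g x)\<^sup>2)"
proof -
  have i: "integrable M (\<lambda>x. 2 * (f x)\<^sup>2 + 2 * (g x)\<^sup>2)" using assms by auto
  have "(f x - g x)\<^sup>2 \<le> 2 * (f x)\<^sup>2 + 2 * (g x)\<^sup>2" for x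
  proof -
    have "0 \<le> (f x + g x)\<^sup>2" by simp
    then show ?thesis by (simp add: power2_eq_square algebra_simps)
  qed
  then have "AE x in M. norm ((f x - g x)\<^sup>2) \<le> norm (2 * (f x)\<^sup>2 + 2 * (g x)\<^sup>2)"
    by simp
  moreover have "(\<lambda>x. (f x - g x)\<^sup>2) \<in> borel_measurable M" using assms by measurable
  ultimately show ?thesis using Bochner_Integration.integrable_bound[OF i] by blast
qed

theorem proposition5:
  fixes M :: "'a measure" and MX :: "'x measure"
    and X :: "'a \<Rightarrow> 'x" and Y :: "'a \<Rightarrow> real ^ 'k::finite"
    and f :: "'x \<Rightarrow> real ^ 'k"
    and J :: nat and B :: "nat \<Rightarrow> (real ^ 'k) set"
    and Q S C S_B C_B :: "'a \<Rightarrow> real ^ 'k"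
  assumes prob: "prob_space M"
    and X_meas: "X \<in> measurable M MX"
    and Y_meas: "Y \<in> borel_measurable M"
    and Y_onehot: "\<And>w. w \<in> space M \<Longrightarrow> \<exists>k. Y w = axis k 1"
    and Q_def: "Q = (\<lambda>w. \<chi> k. real_cond_exp M (gen_sigma M X MX)
                        (indicator {w'\<in>space M. Y w' = axis k 1}) w)"
    and f_meas: "f \<in> borel_measurable MX"
    and f_simplex: "\<And>x. f x \<in> prob_simplex"
    and S_def: "S = f \<circ> X"
    and C_def: "C = vcond_exp M (gen_sigma M S borel) Q"
    and J_pos: "J \<ge> 1"
    and B_borel: "\<And>j. j < J \<Longrightarrow> B j \<in> sets borel"
    and B_nonempty: "\<And>j. j < J \<Longrightarrow> B j \<noteq> {}"
    and B_disj: "\<And>i j. i < J \<Longrightarrow> j < J \<Longrightarrow> i \<noteq> j \<Longrightarrow> B i \<inter> B j = {}"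
    and B_cover: "(\<Union>j<J. B j) = prob_simplex"
    and S_B_def: "S_B = binned M S J B"
    and C_B_def: "C_B = vcond_exp M (gen_sigma M S_B borel) Q"
  shows "(\<integral>w. (norm (S_B w - C_B w))\<^sup>2 \<partial>M)
       = (\<integral>w. (norm (S w - C w))\<^sup>2 \<partial>M)
         - (\<integral>w. var_h_brier M (gen_sigma M S_B borel) (\<lambda>w'. S w' - C w') w \<partial>M)"
proof -
  interpret P: prob_space M by (rule prob)
  define F where "F = gen_sigma M S borel"
  define G where "G = gen_sigma M S_B borel"
  define H where "H = gen_sigma M X MX"
  define E where "E j = S -` B j \<inter> space M" for j
  define cv where "cv j = (1 / measure M (E j)) *\<^sub>R (LINT w|M. indicator (E j) w *\<^sub>R S w)" for j
  have SB: "S_B = (\<lambda>w. \<Sum>j<J. indicator (E j) w *\<^sub>R cv j)"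
    unfolding S_B_def binned_def E_def cv_def by simp
  have S_meas[measurable]: "S \<in> borel_measurable M"
    unfolding S_def using X_meas f_meas by (rule measurable_comp)
  have E_F: "E j \<in> sets F" if "j < J" for j
    unfolding F_def gen_sigma_def E_def by (rule in_vimage_algebra) (rule B_borel[OF that])
  have E_M[measurable]: "E j \<in> sets M" if "j < J" for j
    unfolding E_def using measurable_sets[OF S_meas B_borel[OF that]] by simp
  have subF: "subalgebra M F" and sfF: "sigma_finite_subalgebra M F"
    unfolding F_def using gen_sigma_sub[OF prob S_meas] by auto
  have SB_F: "S_B \<in> borel_measurable F"
    unfolding SB
    by (rule borel_measurable_sum, rule borel_measurable_scaleR, rule borel_measurable_indicator, rule E_F, auto)
  have SB_M[measurable]: "S_B \<in> borel_measurable M"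
    using subF SB_F by (rule measurable_from_subalg)
  have subG: "subalgebra M G" and sfG: "sigma_finite_subalgebra M G"
    unfolding G_def using gen_sigma_sub[OF prob SB_M] by auto
  have subFG: "subalgebra F G"
    unfolding subalgebra_def G_def gen_sigma_def
    using sets_image_in_sets[of F "space M" S_B borel] SB_F subF
    by (auto simp: subalgebra_def)
  have XH: "X \<in> measurable M MX" by (rule X_meas)
  have sfH: "sigma_finite_subalgebra M H"
    unfolding H_def using gen_sigma_sub[OF prob XH] by auto
  have S_bnd: "0 \<le> S w $ k \<and> S w $ k \<le> 1" for w k
  proof -
    have fs: "f (X w) \<in> prob_simplex" by (rule f_simplex)
    then have nn: "\<forall>i. 0 \<le> f (X w) $ i" and s1: "(\<Sum>i\<in>UNIV. f (X w) $ i) = 1"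
      unfolding prob_simplex_def by auto
    have "f (X w) $ k \<le> (\<Sum>i\<in>UNIV. f (X w) $ i)"
      by (rule member_le_sum) (auto simp: nn)
    then show ?thesis using nn s1 unfolding S_def by auto
  qed
  have S_norm: "norm (S w) \<le> 1" for w
  proof -
    have "norm (S w) \<le> (\<Sum>i\<in>UNIV. \<bar>S w $ i\<bar>)" by (rule norm_le_l1_cart)
    also have "\<dots> = (\<Sum>i\<in>UNIV. f (X w) $ i)"
      using S_bnd unfolding S_def by (auto intro!: sum.cong)
    also have "\<dots> = 1" using f_simplex[of "X w"] unfolding prob_simplex_def by auto
    finally show ?thesis .
  qed
  have int_S: "integrable M S"
    by (rule P.integrable_const_bound[where B=1]) (auto simp: S_norm)
  have s_meas[measurable]: "(\<lambda>w. S w $ k) \<in> borel_measurable M" for k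
    by (rule measurable_compose[OF S_meas borel_measurable_nth])
  have s2_meas: "(\<lambda>w. (S w $ k)\<^sup>2) \<in> borel_measurable M" for k
    using s_meas by measurable
  have int_s: "integrable M (\<lambda>w. S w $ k)" for k
    by (rule P.integrable_const_bound[where B=1]) (use S_bnd s_meas in auto)
  have int_s2: "integrable M (\<lambda>w. (S w $ k)\<^sup>2)" for k
    by (rule P.integrable_const_bound[where B=1]) (use S_bnd s2_meas in \<open>auto simp: abs_square_le_1\<close>)
  define Ik where "Ik k = {w'\<in>space M. Y w' = axis k 1}" for k
  have Ik_M[measurable]: "Ik k \<in> sets M" for k
    unfolding Ik_def using Y_meas by measurable
  have Qk: "(\<lambda>w. Q w $ k) = real_cond_exp M H (indicator (Ik k))" for k
    unfolding Q_def H_def Ik_def by auto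
  have Ck: "(\<lambda>w. C w $ k) = real_cond_exp M F (\<lambda>w. Q w $ k)" for k
    unfolding C_def F_def vcond_exp_def by auto
  have CBk: "(\<lambda>w. C_B w $ k) = real_cond_exp M G (\<lambda>w. Q w $ k)" for k
    unfolding C_B_def G_def vcond_exp_def by auto
  have Qk': "Q w $ k = real_cond_exp M H (indicator (Ik k)) w" for w k
    using Qk by metis
  have Ck': "C w $ k = real_cond_exp M F (\<lambda>w. Q w $ k) w" for w k
    using Ck by metis
  have int_I: "integrable M (indicator (Ik k) :: 'a \<Rightarrow> real)" for k
    by (rule P.integrable_const_bound[where B=1]) auto
  have int_I2: "integrable M (\<lambda>w. (indicator (Ik k) w :: real)\<^sup>2)" for k
    by (rule P.integrable_const_bound[where B=1]) (auto simp: indicator_def)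
  have int_q: "integrable M (\<lambda>w. Q w $ k)" for k
    unfolding Qk using sigma_finite_subalgebra.real_cond_exp_int(1)[OF sfH int_I] .
  have int_q2: "integrable M (\<lambda>w. (Q w $ k)\<^sup>2)" for k
    using sq_cond_exp_int[OF sfH int_I int_I2] by (simp add: Qk')
  have int_c: "integrable M (\<lambda>w. C w $ k)" for k
    unfolding Ck using sigma_finite_subalgebra.real_cond_exp_int(1)[OF sfF int_q] .
  have int_c2: "integrable M (\<lambda>w. (C w $ k)\<^sup>2)" for k
    using sq_cond_exp_int[OF sfF int_q int_q2] by (simp add: Ck')
  have int_d: "integrable M (\<lambda>w. S w $ k - C w $ k)" for k
    using int_s int_c by auto
  have int_d2: "integrable M (\<lambda>w. (S w $ k - C w $ k)\<^sup>2)" for k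
    using sq_diff_int[OF int_s2 int_c2] int_s int_c by (auto intro: borel_measurable_integrable)
  have int_ed2: "integrable M (\<lambda>w. (real_cond_exp M G (\<lambda>w. S w $ k - C w $ k) w)\<^sup>2)" for k
    by (rule sq_cond_exp_int[OF sfG int_d int_d2])
  have uniq: "\<exists>j<J. w \<in> E j \<and> (\<forall>i<J. w \<in> E i \<longrightarrow> i = j)" if w: "w \<in> space M" for w
  proof -
    have "S w \<in> prob_simplex" unfolding S_def using f_simplex by simp
    then obtain j where j: "j < J" "S w \<in> B j" using B_cover by auto
    have "i = j" if "i < J" "w \<in> E i" for i
      using B_disj[OF that(1) j(1)] j that unfolding E_def by auto
    then show ?thesis using j w unfolding E_def by auto
  qed
  have E_sp: "E j \<subseteq> space M" for j unfolding E_def by auto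
  have SB_on: "S_B w = cv j" if j: "j < J" "w \<in> E j" for w j
  proof -
    have "w \<in> space M" using j E_sp by auto
    then obtain j' where j': "j' < J" "w \<in> E j'" "\<forall>i<J. w \<in> E i \<longrightarrow> i = j'" using uniq by blast
    then have jj: "j = j'" using j by auto
    have "S_B w = (\<Sum>i<J. if i = j then cv i else 0)"
    proof -
      have "indicator (E i) w *\<^sub>R cv i = (if i = j then cv i else 0)" if "i < J" for i
      proof (cases "i = j")
        case True then show ?thesis using j by simp
      next
        case False
        then have "w \<notin> E i" using j' jj that by blast
        then show ?thesis using False by simp
      qed
      then show ?thesis unfolding SB by (intro sum.cong) auto
    qed
    also have "\<dots> = cv j" using j by simp
    finally show ?thesis .
  qed
  have int_ES: "integrable M (\<lambda>w. indicator (E j) w *\<^sub>R S w)" if "j < J" for j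
    using integrable_mult_indicator[OF E_M[OF that] int_S] .
  have cvk: "cv j $ k = (1 / measure M (E j)) * (\<integral>w. indicator (E j) w * S w $ k \<partial>M)"
    if "j < J" for j k
  proof -
    have "(\<integral>w. (indicator (E j) w *\<^sub>R S w) $ k \<partial>M) = (\<integral>w. indicator (E j) w *\<^sub>R S w \<partial>M) $ k"
      by (rule integral_bounded_linear[OF bounded_linear_vec_nth int_ES[OF that]])
    then show ?thesis unfolding cv_def by simp
  qed
  have ES: "AE w in M. real_cond_exp M G (\<lambda>w. S w $ k) w = S_B w $ k" for k
  proof (rule sigma_finite_subalgebra.real_cond_exp_charact[OF sfG])
    show "integrable M (\<lambda>w. S w $ k)" by (rule int_s)
    have eqSB: "(\<lambda>w. S_B w $ k) = (\<lambda>w. \<Sum>j<J. indicator (E j) w * cv j $ k)"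
      unfolding SB by (auto simp: sum_component)
    have "integrable M (\<lambda>w. \<Sum>j<J. indicator (E j) w * cv j $ k)"
    proof (intro Bochner_Integration.integrable_sum)
      fix j assume "j \<in> {..<J}"
      then have "integrable M (\<lambda>w. indicator (E j) w *\<^sub>R (cv j $ k))"
        by (intro integrable_mult_indicator E_M) auto
      then show "integrable M (\<lambda>w. indicator (E j) w * cv j $ k)" by simp
    qed
    then show "integrable M (\<lambda>w. S_B w $ k)" unfolding eqSB .
    have "S_B \<in> borel_measurable G"
      unfolding G_def gen_sigma_def by (rule measurable_vimage_algebra1) auto
    then show "(\<lambda>w. S_B w $ k) \<in> borel_measurable G"
      by (rule measurable_compose[OF _ borel_measurable_nth])
    fix A assume "A \<in> sets G"
    then obtain U where U: "U \<in> sets borel" "A = S_B -` U \<inter> space M"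
      unfolding G_def gen_sigma_def by (subst (asm) sets_vimage_algebra2) auto
    define T where "T = {j. j < J \<and> cv j \<in> U}"
    have T: "finite T" "T \<subseteq> {..<J}" unfolding T_def by auto
    have indA: "indicator A w = (\<Sum>j\<in>T. indicator (E j) w :: real)" for w
    proof (cases "w \<in> space M")
      case False
      then have "w \<notin> E j" for j using E_sp by blast
      then show ?thesis using U False by (auto simp: indicator_def intro!: sum.neutral)
    next
      case True
      then obtain j where j: "j < J" "w \<in> E j" "\<forall>i<J. w \<in> E i \<longrightarrow> i = j" using uniq by blast
      have "(\<Sum>i\<in>T. indicator (E i) w :: real) = (\<Sum>i\<in>T. if i = j then 1 else 0)"
      proof (rule sum.cong[OF refl])
        fix i assume "i \<in> T"
        then have "i < J" using T by auto
        show "indicator (E i) w = (if i = j then 1 else (0::real))"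
        proof (cases "i = j")
          case True then show ?thesis using j(2) by simp
        next
          case False then have "w \<notin> E i" using j \<open>i < J\<close> by blast
          then show ?thesis using False by simp
        qed
      qed
      also have "\<dots> = (if j \<in> T then 1 else 0)" using T by simp
      also have "\<dots> = indicator A w"
      proof -
        have "S_B w = cv j" by (rule SB_on[OF j(1) j(2)])
        then have "(j \<in> T) = (w \<in> A)" using U True j(1) unfolding T_def by auto
        then show ?thesis by (simp add: indicator_def)
      qed
      finally show ?thesis by simp
    qed
    have split: "(\<integral>x\<in>A. g x \<partial>M) = (\<Sum>j\<in>T. \<integral>x. indicator (E j) x * g x \<partial>M)"
      if g: "integrable M g" for g :: "'a \<Rightarrow> real"
    proof -
      have "(\<integral>x\<in>A. g x \<partial>M) = (\<integral>x. (\<Sum>j\<in>T. indicator (E j) x * g x) \<partial>M)"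
        unfolding set_lebesgue_integral_def indA by (simp add: sum_distrib_right)
      also have "\<dots> = (\<Sum>j\<in>T. \<integral>x. indicator (E j) x * g x \<partial>M)"
      proof (intro Bochner_Integration.integral_sum)
        fix j assume "j \<in> T"
        then have "integrable M (\<lambda>x. indicator (E j) x *\<^sub>R g x)"
          using T by (intro integrable_mult_indicator E_M g) auto
        then show "integrable M (\<lambda>x. indicator (E j) x * g x)" by simp
      qed
      finally show ?thesis .
    qed
    have piece: "(\<integral>x. indicator (E j) x * S x $ k \<partial>M) = (\<integral>x. indicator (E j) x * S_B x $ k \<partial>M)"
      if j: "j < J" for j
    proof -
      have "(\<integral>x. indicator (E j) x * S_B x $ k \<partial>M) = (\<integral>x. indicator (E j) x * cv j $ k \<partial>M)"
        using SB_on[OF j] by (intro Bochner_Integration.integral_cong) (auto simp: indicator_def)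
      also have "\<dots> = measure M (E j) * cv j $ k"
        using E_sp[of j] by (simp add: Int_absorb2)
      also have "\<dots> = (\<integral>x. indicator (E j) x * S x $ k \<partial>M)"
      proof (cases "measure M (E j) = 0")
        case False then show ?thesis using cvk[OF j] by simp
      next
        case True
        then have "E j \<in> null_sets M"
          using E_M[OF j] by (simp add: P.emeasure_eq_measure null_sets_def)
        then have "AE x in M. x \<notin> E j" by (rule AE_not_in)
        then have ae0: "AE x in M. indicator (E j) x * S x $ k = (0::real)"
          by eventually_elim simp
        have mi: "(\<lambda>x. indicator (E j) x * S x $ k) \<in> borel_measurable M"
          using E_M[OF j] by measurable
        have "(\<integral>x. indicator (E j) x * S x $ k \<partial>M) = (\<integral>x. 0 \<partial>M)"
          by (rule integral_cong_AE[OF mi borel_measurable_const ae0])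
        then show ?thesis using True by simp
      qed
      finally show ?thesis by simp
    qed
    show "(\<integral>x\<in>A. S x $ k \<partial>M) = (\<integral>x\<in>A. S_B x $ k \<partial>M)"
      using split[OF int_s] split[OF \<open>integrable M (\<lambda>w. S_B w $ k)\<close>] piece T
      by (auto intro!: sum.cong)
  qed
  have CBk': "C_B w $ k = real_cond_exp M G (\<lambda>w. Q w $ k) w" for w k
    using CBk by metis
  have Ed: "AE w in M. real_cond_exp M G (\<lambda>w. S w $ k - C w $ k) w = S_B w $ k - C_B w $ k" for k
  proof -
    have 1: "AE w in M. real_cond_exp M G (\<lambda>w. S w $ k - C w $ k) w
        = real_cond_exp M G (\<lambda>w. S w $ k) w - real_cond_exp M G (\<lambda>w. C w $ k) w"
      using sigma_finite_subalgebra.real_cond_exp_diff[OF sfG int_s int_c] .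
    have 2: "AE w in M. real_cond_exp M G (\<lambda>w. C w $ k) w = C_B w $ k"
      unfolding Ck CBk' using sigma_finite_subalgebra.real_cond_exp_nested_subalg[OF sfG subF subFG int_q] .
    from 1 2 ES[of k] show ?thesis by eventually_elim simp
  qed
  define d where "d k w = S w $ k - C w $ k" for k w
  define e where "e k w = real_cond_exp M G (d k) w" for k w
  have d_eta: "d k = (\<lambda>w. S w $ k - C w $ k)" for k unfolding d_def by auto
  have e_meas[measurable]: "e k \<in> borel_measurable M" for k
    unfolding e_def by simp
  have cb_meas[measurable]: "(\<lambda>w. C_B w $ k) \<in> borel_measurable M" for k
    unfolding CBk by simp
  have sb_meas[measurable]: "(\<lambda>w. S_B w $ k) \<in> borel_measurable M" for k
    by (rule measurable_compose[OF SB_M borel_measurable_nth])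
  have AEall: "AE w in M. \<forall>k\<in>UNIV. e k w = S_B w $ k - C_B w $ k"
    by (rule AE_finite_allI) (auto simp: e_def d_eta Ed)
  have int_D2: "integrable M (\<lambda>w. \<Sum>k\<in>UNIV. (d k w)\<^sup>2)"
    by (intro Bochner_Integration.integrable_sum) (simp add: d_def int_d2)
  have int_E2: "integrable M (\<lambda>w. \<Sum>k\<in>UNIV. (e k w)\<^sup>2)"
    by (intro Bochner_Integration.integrable_sum) (simp add: e_def d_eta int_ed2)
  have L: "(\<integral>w. (norm (S_B w - C_B w))\<^sup>2 \<partial>M) = (\<integral>w. (\<Sum>k\<in>UNIV. (e k w)\<^sup>2) \<partial>M)"
  proof -
    have "(\<integral>w. (norm (S_B w - C_B w))\<^sup>2 \<partial>M) = (\<integral>w. (\<Sum>k\<in>UNIV. (S_B w $ k - C_B w $ k)\<^sup>2) \<partial>M)"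
      by (simp add: normsq_vec)
    also have "\<dots> = (\<integral>w. (\<Sum>k\<in>UNIV. (e k w)\<^sup>2) \<partial>M)"
    proof (rule integral_cong_AE)
      show "(\<lambda>w. \<Sum>k\<in>UNIV. (S_B w $ k - C_B w $ k)\<^sup>2) \<in> borel_measurable M" by measurable
      show "(\<lambda>w. \<Sum>k\<in>UNIV. (e k w)\<^sup>2) \<in> borel_measurable M" by measurable
      show "AE w in M. (\<Sum>k\<in>UNIV. (S_B w $ k - C_B w $ k)\<^sup>2) = (\<Sum>k\<in>UNIV. (e k w)\<^sup>2)"
        using AEall by eventually_elim simp
    qed
    finally show ?thesis .
  qed
  have R1: "(\<integral>w. (norm (S w - C w))\<^sup>2 \<partial>M) = (\<integral>w. (\<Sum>k\<in>UNIV. (d k w)\<^sup>2) \<partial>M)"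
    by (simp add: normsq_vec d_def)
  have VH: "var_h_brier M (gen_sigma M S_B borel) (\<lambda>w'. S w' - C w') w
      = real_cond_exp M G (\<lambda>w. \<Sum>k\<in>UNIV. (d k w)\<^sup>2) w - (\<Sum>k\<in>UNIV. (e k w)\<^sup>2)" for w
    unfolding var_h_brier_def vcond_exp_def G_def[symmetric] normsq_vec e_def d_def
    by simp
  have R2: "(\<integral>w. var_h_brier M (gen_sigma M S_B borel) (\<lambda>w'. S w' - C w') w \<partial>M)
      = (\<integral>w. (\<Sum>k\<in>UNIV. (d k w)\<^sup>2) \<partial>M) - (\<integral>w. (\<Sum>k\<in>UNIV. (e k w)\<^sup>2) \<partial>M)"
  proof -
    have "(\<integral>w. var_h_brier M (gen_sigma M S_B borel) (\<lambda>w'. S w' - C w') w \<partial>M)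
      = (\<integral>w. real_cond_exp M G (\<lambda>w. \<Sum>k\<in>UNIV. (d k w)\<^sup>2) w \<partial>M) - (\<integral>w. (\<Sum>k\<in>UNIV. (e k w)\<^sup>2) \<partial>M)"
      unfolding VH
      by (rule Bochner_Integration.integral_diff[OF sigma_finite_subalgebra.real_cond_exp_int(1)[OF sfG int_D2] int_E2])
    also have "(\<integral>w. real_cond_exp M G (\<lambda>w. \<Sum>k\<in>UNIV. (d k w)\<^sup>2) w \<partial>M) = (\<integral>w. (\<Sum>k\<in>UNIV. (d k w)\<^sup>2) \<partial>M)"
      by (rule sigma_finite_subalgebra.real_cond_exp_int(2)[OF sfG int_D2])
    finally show ?thesis .
  qed
  show ?thesis unfolding L R1 R2 by simp
qed

end
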